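(* Let $p/q$ (with $p,q$ coprime positive integers) be a convergent of the simple continued fraction expansion of $e$. (i) If $q>1$ and $S(q)$ denotes the smallest positive integer such that $q$ divides $S(q)!$, then $q^2 < (S(q)+1)!$. (ii) If $n>0$ is an integer and $n! = dq$ for some integer $d$ (i.e. $n!$ is a multiple of $q$), then $d^2 > \dfrac{n!}{n+1}$.
   Context: The convergents of $e$ are the rationals $p_k/q_k$ (in lowest terms, $q_k>0$) obtained by truncating the simple continued fraction expansion of $e$; they begin $2/1, 3/1, 8/3, 11/4, 19/7, 87/32,\dots$. *)

theory Defs
  imports Complex_Main
begin

primrec cf_rem :: "real \<Rightarrow> nat \<Rightarrow> real" where
  "cf_rem x 0 = x"
| "cf_rem x (Suc n) = 1 / (cf_rem x n - of_int \<lfloor>cf_rem x n\<rfloor>)"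

definition cf_coeff :: "real \<Rightarrow> nat \<Rightarrow> int" where
  "cf_coeff x n = \<lfloor>cf_rem x n\<rfloor>"

primrec cf_eval :: "nat \<Rightarrow> (nat \<Rightarrow> int) \<Rightarrow> real" where
  "cf_eval 0 a = of_int (a 0)"
| "cf_eval (Suc n) a = of_int (a 0) + 1 / cf_eval n (\<lambda>i. a (Suc i))"

definition convergent_of :: "real \<Rightarrow> nat \<Rightarrow> real" where
  "convergent_of x k = cf_eval k (cf_coeff x)"

definition smarandache :: "nat \<Rightarrow> nat" where
  "smarandache q = (LEAST m. 0 < m \<and> q dvd fact m)"

end

theory Submission
  imports Defs "HOL-Analysis.Complex_Transcendental"
begin

fun mP :: "nat \<Rightarrow> (nat\<Rightarrow>int) \<Rightarrow> int" and mQ :: "nat \<Rightarrow> (nat\<Rightarrow>int) \<Rightarrow> int" where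
  "mP 0 a = a 0"
| "mP (Suc k) a = a 0 * mP k (\<lambda>i. a (Suc i)) + mQ k (\<lambda>i. a (Suc i))"
| "mQ 0 a = 1"
| "mQ (Suc k) a = mP k (\<lambda>i. a (Suc i))"

fun mP' :: "nat \<Rightarrow> (nat\<Rightarrow>int) \<Rightarrow> int" and mQ' :: "nat \<Rightarrow> (nat\<Rightarrow>int) \<Rightarrow> int" where
  "mP' 0 a = 1"
| "mP' (Suc k) a = a 0 * mP' k (\<lambda>i. a (Suc i)) + mQ' k (\<lambda>i. a (Suc i))"
| "mQ' 0 a = 0"
| "mQ' (Suc k) a = mP' k (\<lambda>i. a (Suc i))"

primrec gev :: "nat \<Rightarrow> (nat\<Rightarrow>int) \<Rightarrow> real \<Rightarrow> real" where
  "gev 0 a t = of_int (a 0) + 1 / t"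
| "gev (Suc k) a t = of_int (a 0) + 1 / gev k (\<lambda>i. a (Suc i)) t"

lemma det: "mP k a * mQ' k a - mP' k a * mQ k a = (-1)^(k+1)"
proof (induction k arbitrary: a)
  case 0 then show ?case by simp
next
  case (Suc k)
  have "mP k (\<lambda>i. a (Suc i)) * mQ' k (\<lambda>i. a (Suc i)) - mP' k (\<lambda>i. a (Suc i)) * mQ k (\<lambda>i. a (Suc i)) = (-1)^(k+1)"
    by (rule Suc.IH)
  then show ?case by (simp add: algebra_simps)
qed

lemma posit: "\<forall>i. a i \<ge> 1 \<Longrightarrow> mP k a \<ge> 1 \<and> mQ k a \<ge> 1 \<and> mP' k a \<ge> 1 \<and> mQ' k a \<ge> 0"
proof (induction k arbitrary: a)
  case 0 then show ?case by simp
next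
  case (Suc k)
  have h: "\<forall>i. (\<lambda>i. a (Suc i)) i \<ge> 1" using Suc.prems by simp
  have a0: "a 0 \<ge> 1" using Suc.prems by simp
  let ?b = "\<lambda>i. a (Suc i)"
  from Suc.IH[OF h] have I: "mP k ?b \<ge> 1" "mQ k ?b \<ge> 1" "mP' k ?b \<ge> 1" "mQ' k ?b \<ge> 0" by auto
  have m1: "a 0 * mP k ?b \<ge> 1 * 1" using I a0 by (intro mult_mono) auto
  have m2: "a 0 * mP' k ?b \<ge> 1 * 1" using I a0 by (intro mult_mono) auto
  have "a 0 * mP k ?b + mQ k ?b \<ge> 1" "a 0 * mP' k ?b + mQ' k ?b \<ge> 1" using I m1 m2 by linarith+
  then show ?case using I by simp
qed

lemma mobius: fixes t :: real shows "\<forall>i. a i \<ge> 1 \<Longrightarrow> t > 0 \<Longrightarrow>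
  gev k a t = (real_of_int (mP k a) * t + real_of_int (mP' k a)) / (real_of_int (mQ k a) * t + real_of_int (mQ' k a))"
proof (induction k arbitrary: a)
  case 0 then show ?case by (simp add: field_simps)
next
  case (Suc k)
  let ?b = "\<lambda>i. a (Suc i)"
  have h: "\<forall>i. ?b i \<ge> 1" using Suc.prems by simp
  from posit[OF h, of k] have p: "mP k ?b \<ge> 1" "mP' k ?b \<ge> 1" "mQ k ?b \<ge> 1" "mQ' k ?b \<ge> 0" by auto
  have x1: "real_of_int (mP k ?b) * t > 0" using p Suc.prems(2) by (intro mult_pos_pos) auto
  have x2: "real_of_int (mQ k ?b) * t > 0" using p Suc.prems(2) by (intro mult_pos_pos) auto
  have x3: "real_of_int (mP' k ?b) \<ge> 0" "real_of_int (mQ' k ?b) \<ge> 0" using p by auto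
  have d1: "real_of_int (mP k ?b) * t + real_of_int (mP' k ?b) > 0" using x1 x3 by linarith
  have d2: "real_of_int (mQ k ?b) * t + real_of_int (mQ' k ?b) > 0" using x2 x3 by linarith
  have g: "gev k ?b t = (real_of_int (mP k ?b) * t + real_of_int (mP' k ?b)) / (real_of_int (mQ k ?b) * t + real_of_int (mQ' k ?b))"
    by (rule Suc.IH[OF h Suc.prems(2)])
  have "gev (Suc k) a t = a 0 + 1 / ((real_of_int (mP k ?b) * t + real_of_int (mP' k ?b)) / (real_of_int (mQ k ?b) * t + real_of_int (mQ' k ?b)))"
    by (simp add: g)
  also have "\<dots> = a 0 + (real_of_int (mQ k ?b) * t + real_of_int (mQ' k ?b)) / (real_of_int (mP k ?b) * t + real_of_int (mP' k ?b))"
    by simp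
  also have "\<dots> = ((a 0 * real_of_int (mP k ?b) + real_of_int (mQ k ?b)) * t + (a 0 * real_of_int (mP' k ?b) + real_of_int (mQ' k ?b))) / (real_of_int (mP k ?b) * t + real_of_int (mP' k ?b))"
    using d1 by (simp add: field_simps)
  finally show ?case by simp
qed

lemma cfeval: "\<forall>i. a i \<ge> 1 \<Longrightarrow> cf_eval k a = mP k a / mQ k a"
proof (induction k arbitrary: a)
  case 0 then show ?case by simp
next
  case (Suc k)
  let ?b = "\<lambda>i. a (Suc i)"
  have h: "\<forall>i. ?b i \<ge> 1" using Suc.prems by simp
  from posit[OF h, of k] have p: "mP k ?b \<ge> 1" by auto
  then have "real_of_int (mP k ?b) \<noteq> 0" by linarith
  then show ?case using Suc.IH[OF h] by (simp add: field_simps)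
qed

lemma rem_shift: "cf_rem x (Suc n) = cf_rem (cf_rem x 1) n"
  by (induction n) auto

lemma rem_irr: "x \<notin> \<rat> \<Longrightarrow> cf_rem x n \<notin> \<rat>"
proof (induction n)
  case 0 then show ?case by simp
next
  case (Suc n)
  show ?case
  proof
    assume "cf_rem x (Suc n) \<in> \<rat>"
    then have "1 / (cf_rem x n - of_int \<lfloor>cf_rem x n\<rfloor>) \<in> \<rat>" by simp
    then have "1 / (1 / (cf_rem x n - of_int \<lfloor>cf_rem x n\<rfloor>)) \<in> \<rat>" by (rule Rats_divide[OF Rats_1])
    then have "cf_rem x n - of_int \<lfloor>cf_rem x n\<rfloor> + of_int \<lfloor>cf_rem x n\<rfloor> \<in> \<rat>"
      by (intro Rats_add) auto
    then show False using Suc by simp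
  qed
qed

lemma rem_gt1: "x \<notin> \<rat> \<Longrightarrow> cf_rem x (Suc n) > 1"
proof -
  assume x: "x \<notin> \<rat>"
  have r: "cf_rem x n \<notin> \<rat>" using rem_irr[OF x] .
  then have "cf_rem x n \<noteq> of_int \<lfloor>cf_rem x n\<rfloor>" by (metis Rats_of_int)
  then have "0 < cf_rem x n - of_int \<lfloor>cf_rem x n\<rfloor>" "cf_rem x n - of_int \<lfloor>cf_rem x n\<rfloor> < 1"
    using of_int_floor_le[of "cf_rem x n"] floor_correct[of "cf_rem x n"] by linarith+
  then show ?thesis by simp
qed

lemma expansion: "x \<notin> \<rat> \<Longrightarrow> x = gev k (cf_coeff x) (cf_rem x (Suc k))"
proof (induction k arbitrary: x)
  case 0
  have "x \<noteq> of_int \<lfloor>x\<rfloor>" using 0 by (metis Rats_of_int)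
  then have "x - of_int \<lfloor>x\<rfloor> \<noteq> 0" by simp
  then show ?case by (simp add: cf_coeff_def)
next
  case (Suc k)
  let ?y = "cf_rem x 1"
  have y: "?y \<notin> \<rat>" using rem_irr[OF Suc.prems] .
  have sh: "(\<lambda>i. cf_coeff x (Suc i)) = cf_coeff ?y"
    by (rule ext) (simp only: cf_coeff_def rem_shift)
  have "x \<noteq> of_int \<lfloor>x\<rfloor>" using Suc.prems by (metis Rats_of_int)
  then have xy: "x = of_int \<lfloor>x\<rfloor> + 1 / ?y" by simp
  have r: "cf_rem x (Suc (Suc k)) = cf_rem ?y (Suc k)" by (rule rem_shift)
  have "gev (Suc k) (cf_coeff x) (cf_rem x (Suc (Suc k))) = of_int (cf_coeff x 0) + 1 / gev k (\<lambda>i. cf_coeff x (Suc i)) (cf_rem ?y (Suc k))"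
    unfolding r by (simp only: gev.simps)
  also have "\<dots> = of_int \<lfloor>x\<rfloor> + 1 / gev k (cf_coeff ?y) (cf_rem ?y (Suc k))"
    unfolding sh by (simp add: cf_coeff_def)
  also have "\<dots> = x" using Suc.IH[OF y] xy by simp
  finally show ?case by simp
qed


lemma fact_ge: "fact (n + 1 + j) \<ge> (fact n :: real) * (real n + 1) ^ (j + 1)"
proof (induction j)
  case 0 then show ?case by (simp add: algebra_simps)
next
  case (Suc j)
  have "fact (n + 1 + Suc j) = (real (n + 1 + j) + 1) * (fact (n + 1 + j) :: real)"
    by (simp add: algebra_simps)
  also have "\<dots> \<ge> (real n + 1) * ((fact n :: real) * (real n + 1) ^ (j + 1))"
    using Suc by (intro mult_mono) auto
  finally show ?case by (simp add: algebra_simps)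
qed

lemma tail_facts:
  assumes n: "n > 0"
  shows "\<exists>N::int. \<exists>T. fact n * exp 1 = of_int N + T \<and> 1 / (real n + 1) < T \<and> T \<le> 1 / real n"
proof -
  define f where "f = (\<lambda>k. 1 / (fact k :: real))"
  have fs: "f sums exp 1" using exp_converges[of "1::real"] by (simp add: f_def divide_inverse)
  define g where "g = (\<lambda>i. fact n * f (i + (n+1)))"
  have gs: "g sums (fact n * (exp 1 - (\<Sum>i<n+1. f i)))"
    unfolding g_def by (intro sums_mult sums_split_initial_segment fs)
  define T where "T = fact n * (exp 1 - (\<Sum>i<n+1. f i))"
  have sg: "summable g" using gs by (rule sums_summable)
  have Tg: "T = suminf g" using gs by (simp add: T_def sums_iff)
  have g0: "g 0 = 1 / (real n + 1)" by (simp add: g_def f_def add.commute)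
  have gpos: "\<And>m. 0 < g m" by (simp add: g_def f_def)
  have "sum g {..<1} < suminf g" by (rule sum_less_suminf[OF sg]) (use gpos in auto)
  then have T1: "1 / (real n + 1) < T" using g0 Tg by simp
  define h where "h = (\<lambda>i. (1 / (real n + 1)) * (1 / (real n + 1)) ^ i)"
  have hs: "h sums ((1 / (real n + 1)) * (1 / (1 - 1 / (real n + 1))))"
    unfolding h_def using n by (intro sums_mult geometric_sums) auto
  have hv: "(1 / (real n + 1)) * (1 / (1 - 1 / (real n + 1))) = 1 / real n"
    using n by (simp add: field_simps)
  have gh: "g i \<le> h i" for i
  proof -
    have "g i = fact n / fact (n + 1 + i)" by (simp add: g_def f_def add.commute add.left_commute)
    also have "\<dots> \<le> fact n / ((fact n :: real) * (real n + 1) ^ (i + 1))"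
      by (rule divide_left_mono) (use fact_ge[of n i] in auto)
    also have "\<dots> = 1 / (real n + 1) ^ (i + 1)" by simp
    also have "\<dots> = h i" by (simp add: h_def power_divide)
    finally show ?thesis .
  qed
  have "suminf g \<le> suminf h" by (rule suminf_le[OF gh sg]) (use hs in \<open>simp add: sums_summable\<close>)
  then have T2: "T \<le> 1 / real n" using hs hv Tg by (simp add: sums_iff)
  have "(fact n :: real) * (\<Sum>i<n+1. f i) = (\<Sum>i<n+1. real (fact n div fact i))"
    unfolding sum_distrib_left
  proof (rule sum.cong)
    fix i assume "i \<in> {..<n+1}"
    then have "fact i dvd (fact n :: nat)" by (intro fact_dvd) auto
    then show "(fact n :: real) * f i = real (fact n div fact i)"
      by (simp add: f_def real_of_nat_div)
  qed simp
  then have "fact n * exp 1 = of_int (int (\<Sum>i<n+1. fact n div fact i)) + T"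
    by (simp add: T_def algebra_simps)
  with T1 T2 show ?thesis by blast
qed

lemma e_irr: "(exp 1 :: real) \<notin> \<rat>"
proof
  assume "(exp 1 :: real) \<in> \<rat>"
  then obtain a b :: int where ab: "b > 0" "(exp 1 :: real) = of_int a / of_int b" and "coprime a b"
    by (rule Rats_cases')
  define n where "n = nat b + 1"
  have n2: "n \<ge> 2" using ab by (simp add: n_def)
  have "nat b dvd fact n" using ab by (intro dvd_fact) (auto simp: n_def)
  then obtain c where c: "fact n = nat b * c" by blast
  have fr: "(fact n :: real) = real_of_int b * real c"
    using arg_cong[OF c, of real] ab(1) by simp
  have "(fact n :: real) * exp 1 = of_int (int c * a)"
    unfolding fr ab(2) using ab(1) by (simp add: field_simps)
  moreover obtain N T where NT: "(fact n :: real) * exp 1 = of_int N + T" "1 / (real n + 1) < T" "T \<le> 1 / real n"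
    using tail_facts[of n] n2 by auto
  ultimately have "T = of_int (int c * a - N)" by simp
  moreover have "0 < T"
  proof -
    have "0 < 1 / (real n + 1)" by simp
    then show ?thesis using NT(2) by linarith
  qed
  moreover have "T < 1"
  proof -
    have "1 / real n < 1" using n2 by simp
    then show ?thesis using NT(3) by linarith
  qed
  ultimately show False
  proof -
    assume T: "T = of_int (int c * a - N)" and T0: "0 < T" and T1: "T < 1"
    have "0 < int c * a - N" using T T0 of_int_0_less_iff[of "int c * a - N", where ?'a=real] by argo
    then have "1 \<le> int c * a - N" by simp
    then have "1 \<le> T" unfolding T using of_int_le_iff[of 1 "int c * a - N", where ?'a=real] by simp
    with T1 show False by simp
  qed
qed


lemma mob_diff:
  fixes P P' Q Q' t :: real
  assumes "Q * t + Q' > 0" "Q > 0"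
  shows "(P * t + P') / (Q * t + Q') - P / Q = (P' * Q - P * Q') / (Q * (Q * t + Q'))"
  using assms by (simp add: field_simps)

lemma conv_bound:
  fixes p q :: nat
  assumes "0 < q" and "coprime p q"
    and "real p / real q = convergent_of (exp 1) k"
  shows "\<bar>real q * exp 1 - real p\<bar> < 1 / real q"
proof -
  let ?x = "exp 1 :: real"
  let ?a = "cf_coeff ?x"
  have irr: "?x \<notin> \<rat>" by (rule e_irr)
  have e2: "2 \<le> ?x" using exp_ge_add_one_self[of "1::real"] by simp
  have e3: "?x < 3" using e_less_272 by simp
  have "\<lfloor>?x\<rfloor> = 2" using e2 e3 by (simp add: floor_eq_iff)
  then have a0: "?a 0 = 2" by (simp add: cf_coeff_def)
  have aS: "?a (Suc n) \<ge> 1" for n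
    using rem_gt1[OF irr, of n] by (simp add: cf_coeff_def le_floor_iff)
  have pos: "\<forall>i. ?a i \<ge> 1"
  proof
    fix i show "?a i \<ge> 1" using a0 aS by (cases i) auto
  qed
  define P where "P = mP k ?a"
  define P' where "P' = mP' k ?a"
  define Q where "Q = mQ k ?a"
  define Q' where "Q' = mQ' k ?a"
  have ps: "P \<ge> 1" "Q \<ge> 1" "P' \<ge> 1" "Q' \<ge> 0" using posit[OF pos, of k] by (auto simp: P_def Q_def P'_def Q'_def)
  have dt: "P * Q' - P' * Q = (-1)^(k+1)" using det[of k ?a] by (simp add: P_def Q_def P'_def Q'_def)
  define t where "t = cf_rem ?x (Suc k)"
  have t1: "t > 1" using rem_gt1[OF irr] by (simp add: t_def)
  have xe: "?x = (real_of_int P * t + real_of_int P') / (real_of_int Q * t + real_of_int Q')"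
  proof -
    have t0: "0 < t" using t1 by simp
    have "?x = gev k ?a t" using expansion[OF irr, of k] by (simp add: t_def)
    also have "\<dots> = (real_of_int P * t + real_of_int P') / (real_of_int Q * t + real_of_int Q')"
      unfolding P_def Q_def P'_def Q'_def by (rule mobius[OF pos t0])
    finally show ?thesis .
  qed
  have cv: "real p / real q = P / Q"
    using assms(3) cfeval[OF pos, of k] by (simp add: convergent_of_def P_def Q_def)
  have Qr: "real_of_int Q > 0" "real q > 0" using ps assms(1) by auto
  have eq: "int p * Q = P * int q"
  proof -
    have "real p * Q = P * real q" using cv Qr by (simp add: field_simps)
    then have "real_of_int (int p * Q) = real_of_int (P * int q)" by simp
    then show ?thesis by (simp only: of_int_eq_iff)
  qed
  have cop: "coprime P Q"
  proof (rule coprimeI)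
    fix c assume "c dvd P" "c dvd Q"
    then have "c dvd P * Q' - P' * Q" by (simp add: dvd_diff)
    then have "c dvd (-1::int)^(k+1)" using dt by simp
    moreover have "(-1::int)^(k+1) dvd 1" by (simp add: is_unit_power_iff)
    ultimately have "c dvd 1" by (rule dvd_trans)
    then show "is_unit c" by simp
  qed
  have e1: "Q * int p = int q * P" using eq by (simp add: mult.commute)
  have "int q dvd Q * int p" unfolding e1 by simp
  moreover have "coprime (int q) (int p)" using assms(2) by (simp add: coprime_commute)
  ultimately have d1: "int q dvd Q" by (meson coprime_dvd_mult_left_iff)
  have e2: "P * int q = Q * int p" using eq by (simp add: mult.commute)
  have "Q dvd P * int q" unfolding e2 by simp
  then have d2: "Q dvd int q" using cop by (meson coprime_commute coprime_dvd_mult_right_iff)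
  have qQ: "int q = Q" using d1 d2 ps assms(1) by (simp add: zdvd_antisym_nonneg)
  have "real_of_int Q * t > real_of_int Q * 1" using ps t1 by (intro mult_strict_left_mono) auto
  then have den: "real_of_int Q * t + real_of_int Q' > real_of_int Q" using ps by linarith
  have diff: "?x - P / Q = real_of_int (P' * Q - P * Q') / (real_of_int Q * (real_of_int Q * t + real_of_int Q'))"
    unfolding xe using den Qr by (simp add: mob_diff)
  have numi: "P' * Q - P * Q' = - ((-1)^(k+1))" using dt by simp
  have ni: "\<bar>P' * Q - P * Q'\<bar> = 1" unfolding numi by simp
  have n1: "\<bar>real_of_int (P' * Q - P * Q')\<bar> = 1"
    unfolding of_int_abs[symmetric] ni by simp
  have dpos: "real_of_int Q * (real_of_int Q * t + real_of_int Q') > 0" using den Qr by simp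
  have ab: "\<bar>?x - P / Q\<bar> = 1 / (real_of_int Q * (real_of_int Q * t + real_of_int Q'))"
    unfolding diff abs_divide n1 using dpos by simp
  have "1 / (real_of_int Q * (real_of_int Q * t + real_of_int Q')) < 1 / (real_of_int Q * real_of_int Q)"
    using den Qr by (intro divide_strict_left_mono mult_strict_left_mono) auto
  with ab have lt: "\<bar>?x - P / Q\<bar> < 1 / (real_of_int Q * real_of_int Q)" by simp
  have rQ: "real_of_int Q = real q" using qQ by (simp add: qQ[symmetric])
  have cv2: "real_of_int P / real_of_int Q = real p / real q" using cv by simp
  have cv3: "real_of_int P / real q = real p / real q" using cv2 unfolding rQ .
  have "\<bar>?x - real p / real q\<bar> < 1 / (real q * real q)"
    using lt unfolding rQ cv3 .
  then have "real q * \<bar>?x - real p / real q\<bar> < real q * (1 / (real q * real q))"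
    by (rule mult_strict_left_mono) (use Qr in simp)
  moreover have "real q * (1 / (real q * real q)) = 1 / real q" using Qr by simp
  moreover have "real q * \<bar>?x - real p / real q\<bar> = \<bar>real q * ?x - real p\<bar>"
  proof -
    have e: "real q * ?x - real p = real q * (?x - real p / real q)" using Qr by (simp add: algebra_simps)
    show ?thesis unfolding e abs_mult using Qr by simp
  qed
  ultimately show ?thesis by simp
qed


lemma part2:
  fixes p q :: nat
  assumes q0: "0 < q" and key: "\<bar>real q * exp 1 - real p\<bar> < 1 / real q"
    and n0: "0 < n" and fd: "fact n = d * int q"
  shows "real_of_int d ^ 2 > fact n / real (n + 1)"
proof -
  have fpos: "(fact n :: int) > 0" by simp
  then have dpos: "d > 0" using fd q0 by (simp add: zero_less_mult_iff)
  have fdr: "(fact n :: real) = real_of_int d * real q"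
    using arg_cong[OF fd, of real_of_int] by simp
  show ?thesis
  proof (cases "n = 1")
    case True
    then have "d * int q = 1" using fd by simp
    then have "d = 1" using dpos q0 by (simp add: zmult_eq_1_iff)
    then show ?thesis using True by simp
  next
    case False
    then have n2: "n \<ge> 2" using n0 by simp
    obtain N T where NT: "(fact n :: real) * exp 1 = of_int N + T" "1 / (real n + 1) < T" "T \<le> 1 / real n"
      using tail_facts[OF n0] by auto
    define m where "m = d * int p"
    have "(fact n :: real) * exp 1 - of_int m = real_of_int d * (real q * exp 1 - real p)"
      unfolding fdr m_def by (simp add: algebra_simps)
    then have "\<bar>(fact n :: real) * exp 1 - of_int m\<bar> = real_of_int d * \<bar>real q * exp 1 - real p\<bar>"
      using dpos by (simp add: abs_mult)
    also have "\<dots> < real_of_int d * (1 / real q)"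
      using dpos key by (intro mult_strict_left_mono) auto
    finally have up: "\<bar>of_int (N - m) + T\<bar> < real_of_int d / real q" using NT(1) by simp
    have Tn: "1 / real n < 1 - 1 / (real n + 1)"
    proof -
      have r2: "real n \<ge> 2" using n2 by simp
      have "1 / real n \<le> 1 / 2" using r2 by (intro divide_left_mono) auto
      moreover have "1 / (real n + 1) \<le> 1 / 3" using r2 by (intro divide_left_mono) auto
      ultimately show ?thesis by linarith
    qed
    have low: "\<bar>of_int (N - m) + T\<bar> > 1 / (real n + 1)"
    proof (cases "N - m \<ge> 0")
      case True
      then have "of_int (N - m) + T \<ge> T" by simp
      then show ?thesis using NT(2) by linarith
    next
      case False
      then have "real_of_int (N - m) \<le> -1" by simp
      then show ?thesis using NT(3) Tn by linarith
    qed
    have qr: "real q > 0" using q0 by simp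
    have "1 / (real n + 1) < real_of_int d / real q" using low up by linarith
    then have "real q < real_of_int d * (real n + 1)" using qr by (simp add: field_simps)
    then have "real_of_int d * real q < real_of_int d * (real_of_int d * (real n + 1))"
      using dpos by simp
    then have "fact n < real_of_int d ^ 2 * (real n + 1)" unfolding fdr by (simp add: power2_eq_square algebra_simps)
    then show ?thesis by (simp add: field_simps)
  qed
qed

theorem lemma2p1:
  fixes p q :: nat
  assumes "0 < p" and "0 < q" and "coprime p q"
    and "\<exists>k. real p / real q = convergent_of (exp 1) k"
  shows "(1 < q \<longrightarrow> q ^ 2 < fact (smarandache q + 1))
       \<and> (\<forall>(n::nat) (d::int). 0 < n \<longrightarrow> fact n = d * int q
            \<longrightarrow> real_of_int d ^ 2 > fact n / real (n + 1))"
proof -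
  obtain k where k: "real p / real q = convergent_of (exp 1) k" using assms(4) by blast
  have key: "\<bar>real q * exp 1 - real p\<bar> < 1 / real q"
    by (rule conv_bound[OF assms(2) assms(3) k])
  have P2: "\<forall>(n::nat) (d::int). 0 < n \<longrightarrow> fact n = d * int q
            \<longrightarrow> real_of_int d ^ 2 > fact n / real (n + 1)"
    using part2[OF assms(2) key] by blast
  have P1: "q ^ 2 < fact (smarandache q + 1)"
  proof -
    define S where "S = smarandache q"
    have ex: "0 < q \<and> q dvd fact q" using assms(2) by (simp add: dvd_fact)
    have "0 < S \<and> q dvd fact S"
      unfolding S_def smarandache_def by (rule LeastI[of _ q]) (rule ex)
    then have S0: "0 < S" and dv: "q dvd fact S" by auto
    then obtain c where c: "fact S = q * c" by blast
    have "(fact S :: int) = int c * int q" using arg_cong[OF c, of int] by (simp add: mult.commute)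
    then have "real_of_int (int c) ^ 2 > fact S / real (S + 1)" using P2 S0 by blast
    then have h: "real c ^ 2 * (real S + 1) > fact S" by (simp add: field_simps)
    have cr: "(fact S :: real) = real c * real q" using arg_cong[OF c, of real] by (simp add: mult.commute)
    have fpos: "(fact S :: real) > 0" by simp
    have "(fact S :: real) * real q ^ 2 < real c ^ 2 * (real S + 1) * real q ^ 2"
      using h assms(2) by simp
    also have "\<dots> = fact S * (fact S * (real S + 1))" unfolding cr by (simp add: power2_eq_square)
    finally have "real q ^ 2 < fact S * (real S + 1)" using fpos by simp
    then have "real (q ^ 2) < real (fact (S + 1))" by (simp add: algebra_simps)
    then show ?thesis unfolding S_def by linarith
  qed
  show ?thesis using P1 P2 by blast
qed

end
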